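(* Let $\alpha\in(0,1)$ be irrational and let $s_\alpha$ be a Sturmian word of angle $\alpha$. If $s_\alpha$ is $\beta$-power free for some $\beta\ge 2$, then $s_\alpha$ is uniformly abelian-square rich.
   Context: Alphabet $\{a,b\}$; $\{x\}=x-\lfloor x\rfloor$. For irrational $\alpha\in(0,1)$ and $\rho\in[0,1)$, the Sturmian word $s_{\alpha,\rho}=c_0c_1\cdots$ has $c_m=b$ if $\{\rho+m\alpha\}\in[0,1-\alpha)$ and $c_m=a$ otherwise (or with intervals $(0,1-\alpha]$ and $(1-\alpha,1]$); $s_\alpha$ denotes any such word. An infinite word is $\beta$-power free if for every nonempty factor $v$, the ratio of $|v|$ to the minimal period of $v$ is smaller than $\beta$. An abelian square is a word $v_1v_2$ with $v_1,v_2$ having the same numbers of each letter. An infinite word $w$ is uniformly abelian-square rich if there is a constant $C>0$ such that for all sufficiently large $n$, every factor of $w$ of length $n$ has at least $Cn^2$ distinct factors that are abelian squares. *)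

theory Defs
  imports Complex_Main
begin

datatype letter = a | b

definition sturmian_lower :: "real \<Rightarrow> real \<Rightarrow> nat \<Rightarrow> letter" where
  "sturmian_lower \<alpha> \<rho> m = (if frac (\<rho> + real m * \<alpha>) < 1 - \<alpha> then b else a)"

text \<open>Sturmian word with intervals (0,1-alpha] for b and (1-alpha,1] for a
  (the fractional part 0 is identified with 1).\<close>
definition sturmian_upper :: "real \<Rightarrow> real \<Rightarrow> nat \<Rightarrow> letter" where
  "sturmian_upper \<alpha> \<rho> m =
     (if 0 < frac (\<rho> + real m * \<alpha>) \<and> frac (\<rho> + real m * \<alpha>) \<le> 1 - \<alpha> then b else a)"

definition is_sturmian :: "real \<Rightarrow> (nat \<Rightarrow> letter) \<Rightarrow> bool" where
  "is_sturmian \<alpha> w \<longleftrightarrow> (\<exists>\<rho>. 0 \<le> \<rho> \<and> \<rho> < 1 \<and> (w = sturmian_lower \<alpha> \<rho> \<or> w = sturmian_upper \<alpha> \<rho>))"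

definition inf_factor :: "(nat \<Rightarrow> 'x) \<Rightarrow> nat \<Rightarrow> nat \<Rightarrow> 'x list" where
  "inf_factor w i n = map w [i..<i+n]"

definition is_factor :: "'x list \<Rightarrow> 'x list \<Rightarrow> bool" where
  "is_factor u v \<longleftrightarrow> (\<exists>xs ys. v = xs @ u @ ys)"

definition is_period :: "nat \<Rightarrow> 'x list \<Rightarrow> bool" where
  "is_period p v \<longleftrightarrow> 0 < p \<and> (\<forall>i. i + p < length v \<longrightarrow> v ! i = v ! (i + p))"

definition min_period :: "'x list \<Rightarrow> nat" where
  "min_period v = (LEAST p. is_period p v)"

definition power_free :: "real \<Rightarrow> (nat \<Rightarrow> 'x) \<Rightarrow> bool" where
  "power_free \<beta> w \<longleftrightarrow>
     (\<forall>i n. 0 < n \<longrightarrow> real n / real (min_period (inf_factor w i n)) < \<beta>)"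

definition abelian_square :: "'x list \<Rightarrow> bool" where
  "abelian_square u \<longleftrightarrow>
     (\<exists>v1 v2. u = v1 @ v2 \<and> (\<forall>c. count_list v1 c = count_list v2 c))"

definition unif_abelian_square_rich :: "(nat \<Rightarrow> 'x) \<Rightarrow> bool" where
  "unif_abelian_square_rich w \<longleftrightarrow>
     (\<exists>C::real. C > 0 \<and> (\<exists>N. \<forall>n \<ge> N. \<forall>i.
        real (card {u. is_factor u (inf_factor w i n) \<and> abelian_square u}) \<ge> C * real n ^ 2))"

end

theory Submission
  imports Defs
begin


lemma int_between:
  fixes d :: int and y :: real
  assumes "y - 1 < d" "d < y + 1"
  shows "d = \<lfloor>y\<rfloor> \<or> d = \<lfloor>y\<rfloor> + 1"
proof -
  have "\<lfloor>y\<rfloor> \<le> y" "y < \<lfloor>y\<rfloor> + 1" by linarith+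
  then have "real_of_int \<lfloor>y\<rfloor> - 1 < d" "real_of_int d < real_of_int (\<lfloor>y\<rfloor> + 2)" using assms by linarith+
  then have "\<lfloor>y\<rfloor> - 1 < d" "d < \<lfloor>y\<rfloor> + 2" by linarith+
  then show ?thesis by linarith
qed

lemma floor_add_diff:
  fixes x y :: real
  shows "\<lfloor>x + y\<rfloor> - \<lfloor>x\<rfloor> = \<lfloor>y\<rfloor> \<or> \<lfloor>x + y\<rfloor> - \<lfloor>x\<rfloor> = \<lfloor>y\<rfloor> + 1"
proof -
  have "\<lfloor>x\<rfloor> \<le> x" "x < \<lfloor>x\<rfloor> + 1" "\<lfloor>x+y\<rfloor> \<le> x+y" "x+y < \<lfloor>x+y\<rfloor> + 1" by linarith+
  then have h: "y - 1 < \<lfloor>x + y\<rfloor> - \<lfloor>x\<rfloor>" "\<lfloor>x + y\<rfloor> - \<lfloor>x\<rfloor> < y + 1" by linarith+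
  show ?thesis using int_between[OF h] by simp
qed

lemma ceil_add_diff:
  fixes x y :: real
  shows "\<lceil>x + y\<rceil> - \<lceil>x\<rceil> = \<lfloor>y\<rfloor> \<or> \<lceil>x + y\<rceil> - \<lceil>x\<rceil> = \<lfloor>y\<rfloor> + 1"
proof -
  have "\<lceil>x\<rceil> - 1 < x" "x \<le> \<lceil>x\<rceil>" "\<lceil>x+y\<rceil> - 1 < x + y" "x + y \<le> \<lceil>x+y\<rceil>"
    by (auto simp: ceiling_correct)
  then have h: "y - 1 < \<lceil>x + y\<rceil> - \<lceil>x\<rceil>" "\<lceil>x + y\<rceil> - \<lceil>x\<rceil> < y + 1" by linarith+
  show ?thesis using int_between[OF h] by simp
qed

lemma floor_step:
  fixes x \<alpha> :: real
  assumes "0 < \<alpha>" "\<alpha> < 1"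
  shows "(\<lfloor>x + \<alpha>\<rfloor> - \<lfloor>x\<rfloor> = 1) \<longleftrightarrow> \<not> frac x < 1 - \<alpha>"
proof -
  have "\<lfloor>x\<rfloor> \<le> x" "x < \<lfloor>x\<rfloor> + 1" by linarith+
  then show ?thesis using assms by (simp add: frac_def floor_eq_iff) linarith
qed

lemma ceil_step:
  fixes x \<alpha> :: real
  assumes "0 < \<alpha>" "\<alpha> < 1"
  shows "(\<lceil>x + \<alpha>\<rceil> - \<lceil>x\<rceil> = 1) \<longleftrightarrow> \<not> (0 < frac x \<and> frac x \<le> 1 - \<alpha>)"
proof -
  have "\<lfloor>x\<rfloor> \<le> x" "x < \<lfloor>x\<rfloor> + 1" by linarith+
  then show ?thesis using assms by (simp add: frac_def ceiling_altdef floor_eq_iff) linarith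
qed

lemma sturm_F:
  assumes "0 < \<alpha>" "\<alpha> < 1" "is_sturmian \<alpha> w"
  obtains F :: "nat \<Rightarrow> int" where
    "\<And>t L. F (t + L) - F t = \<lfloor>real L * \<alpha>\<rfloor> \<or> F (t + L) - F t = \<lfloor>real L * \<alpha>\<rfloor> + 1"
    "\<And>t. w t = a \<longleftrightarrow> F (Suc t) - F t = 1"
proof -
  obtain \<rho> where r: "w = sturmian_lower \<alpha> \<rho> \<or> w = sturmian_upper \<alpha> \<rho>"
    using assms(3) unfolding is_sturmian_def by blast
  have e: "\<rho> + real (t + L) * \<alpha> = (\<rho> + real t * \<alpha>) + real L * \<alpha>" for t L
    by (simp add: algebra_simps)
  have e1: "\<rho> + real (Suc t) * \<alpha> = (\<rho> + real t * \<alpha>) + \<alpha>" for t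
    by (simp add: algebra_simps)
  show ?thesis
  proof (cases "w = sturmian_lower \<alpha> \<rho>")
    case True
    show ?thesis
    proof (rule that[of "\<lambda>t. \<lfloor>\<rho> + real t * \<alpha>\<rfloor>"])
      show "\<lfloor>\<rho> + real (t + L) * \<alpha>\<rfloor> - \<lfloor>\<rho> + real t * \<alpha>\<rfloor> = \<lfloor>real L * \<alpha>\<rfloor> \<or>
            \<lfloor>\<rho> + real (t + L) * \<alpha>\<rfloor> - \<lfloor>\<rho> + real t * \<alpha>\<rfloor> = \<lfloor>real L * \<alpha>\<rfloor> + 1" for t L
        unfolding e by (rule floor_add_diff)
      show "w t = a \<longleftrightarrow> \<lfloor>\<rho> + real (Suc t) * \<alpha>\<rfloor> - \<lfloor>\<rho> + real t * \<alpha>\<rfloor> = 1" for t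
        unfolding e1 floor_step[OF assms(1,2)] True sturmian_lower_def by auto
    qed
  next
    case False
    then have W: "w = sturmian_upper \<alpha> \<rho>" using r by blast
    show ?thesis
    proof (rule that[of "\<lambda>t. \<lceil>\<rho> + real t * \<alpha>\<rceil>"])
      show "\<lceil>\<rho> + real (t + L) * \<alpha>\<rceil> - \<lceil>\<rho> + real t * \<alpha>\<rceil> = \<lfloor>real L * \<alpha>\<rfloor> \<or>
            \<lceil>\<rho> + real (t + L) * \<alpha>\<rceil> - \<lceil>\<rho> + real t * \<alpha>\<rceil> = \<lfloor>real L * \<alpha>\<rfloor> + 1" for t L
        unfolding e by (rule ceil_add_diff)
      show "w t = a \<longleftrightarrow> \<lceil>\<rho> + real (Suc t) * \<alpha>\<rceil> - \<lceil>\<rho> + real t * \<alpha>\<rceil> = 1" for t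
        unfolding e1 ceil_step[OF assms(1,2)] W sturmian_upper_def by auto
    qed
  qed
qed

lemma inf_factor_Suc: "inf_factor w p (Suc m) = inf_factor w p m @ [w (p + m)]"
  by (simp add: inf_factor_def)

lemma inf_factor_add: "inf_factor w p (m + k) = inf_factor w p m @ inf_factor w (p + m) k"
proof -
  have "[p..<p + (m + k)] = [p..<p+m] @ [p+m..<p + (m + k)]"
    using upt_add_eq_append[of p "p+m" k] by (simp add: add.assoc)
  then show ?thesis by (simp add: inf_factor_def add.assoc)
qed

lemma length_inf_factor[simp]: "length (inf_factor w p m) = m"
  by (simp add: inf_factor_def)

lemma count_ab: "count_list xs a + count_list xs b = length xs"
proof (induction xs)
  case (Cons x xs) then show ?case by (cases x) auto
qed simp

lemma count_a:
  assumes HF: "\<And>t L. F (t + L) - F t = \<lfloor>real L * \<alpha>\<rfloor> \<or> F (t + L) - F t = \<lfloor>real L * \<alpha>\<rfloor> + 1"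
    and HW: "\<And>t. w t = a \<longleftrightarrow> F (Suc t) - F t = 1"
    and al: "0 < \<alpha>" "\<alpha> < 1"
  shows "int (count_list (inf_factor w p m) a) = F (p + m) - F p"
proof (induction m)
  case 0 then show ?case by (simp add: inf_factor_def)
next
  case (Suc m)
  have fl: "\<lfloor>real 1 * \<alpha>\<rfloor> = 0" using al by (simp add: floor_eq_iff)
  have st: "F (Suc (p + m)) - F (p + m) = 0 \<or> F (Suc (p + m)) - F (p + m) = 1"
    using HF[of "p + m" 1] fl by simp
  show ?case
  proof (cases "w (p + m) = a")
    case True
    then have "F (Suc (p + m)) - F (p + m) = 1" using HW by blast
    then show ?thesis using Suc True by (simp add: inf_factor_Suc)
  next
    case False
    then have "F (Suc (p + m)) - F (p + m) = 0" using HW st by blast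
    then show ?thesis using Suc False by (simp add: inf_factor_Suc)
  qed
qed

lemma factor_sub:
  assumes "i \<le> p" "p + L \<le> i + n"
  shows "is_factor (inf_factor w p L) (inf_factor w i n)"
proof -
  have "inf_factor w i n = inf_factor w i (p - i) @ inf_factor w p L @ inf_factor w (p + L) (i + n - (p + L))"
    using inf_factor_add[of w i "p - i" "L + (i + n - (p + L))"] inf_factor_add[of w p L "i + n - (p + L)"] assms
    by simp
  then show ?thesis unfolding is_factor_def by blast
qed

lemma pf_distinct:
  fixes \<beta> :: real
  assumes pf: "power_free \<beta> w" and pq: "p < q" and L: "0 < L"
    and eq: "inf_factor w p L = inf_factor w q L"
  shows "real L < (\<beta> - 1) * real (q - p)"
proof -
  define d where "d = q - p"
  have d: "0 < d" "q = p + d" using pq by (auto simp: d_def)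
  define v where "v = inf_factor w p (d + L)"
  have per: "is_period d v" unfolding is_period_def
  proof (intro conjI allI impI)
    show "0 < d" by fact
    fix j assume j: "j + d < length v"
    then have jL: "j < L" by (simp add: v_def)
    have "v ! j = w (p + j)" using j by (simp add: v_def inf_factor_def)
    also have "\<dots> = inf_factor w p L ! j" using jL by (simp add: inf_factor_def)
    also have "\<dots> = inf_factor w q L ! j" by (simp add: eq)
    also have "\<dots> = w (q + j)" using jL by (simp add: inf_factor_def)
    also have "\<dots> = v ! (j + d)" using j d by (simp add: v_def inf_factor_def add_ac)
    finally show "v ! j = v ! (j + d)" .
  qed
  have mp: "is_period (min_period v) v" "min_period v \<le> d"
    unfolding min_period_def using per by (auto intro: LeastI Least_le)
  then have mp0: "0 < min_period v" by (simp add: is_period_def)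
  have "real (d + L) / real (min_period v) < \<beta>"
    using pf L unfolding power_free_def v_def by (metis add_gr_0 of_nat_add)
  moreover have "real (d + L) / real d \<le> real (d + L) / real (min_period v)"
    using mp mp0 by (intro divide_left_mono) auto
  ultimately have "real (d + L) / real d < \<beta>" by linarith
  then have "real (d + L) < \<beta> * real d" using d by (simp add: divide_less_eq)
  then show ?thesis by (simp add: d_def[symmetric] algebra_simps)
qed

lemma AS_lemma:
  assumes HF: "\<And>t L. F (t + L) - F t = \<lfloor>real L * \<alpha>\<rfloor> \<or> F (t + L) - F t = \<lfloor>real L * \<alpha>\<rfloor> + 1"
    and HW: "\<And>t. w t = a \<longleftrightarrow> F (Suc t) - F t = 1"
    and al: "0 < \<alpha>" "\<alpha> < 1"
    and eq: "F (p + m) - F p = F (p + m + m) - F (p + m)"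
  shows "abelian_square (inf_factor w p (2 * m))"
proof -
  define v1 where "v1 = inf_factor w p m"
  define v2 where "v2 = inf_factor w (p + m) m"
  have sp: "inf_factor w p (2 * m) = v1 @ v2"
    unfolding v1_def v2_def mult_2 by (rule inf_factor_add)
  have ca: "count_list v1 a = count_list v2 a"
    using count_a[OF HF HW al, of p m] count_a[OF HF HW al, of "p + m" m] eq
    unfolding v1_def v2_def by simp
  have cb: "count_list v1 b = count_list v2 b"
    using count_ab[of v1] count_ab[of v2] ca by (simp add: v1_def v2_def)
  have "\<forall>c. count_list v1 c = count_list v2 c"
  proof
    fix c show "count_list v1 c = count_list v2 c" using ca cb by (cases c) auto
  qed
  then show ?thesis unfolding abelian_square_def using sp by blast
qed

definition good :: "real \<Rightarrow> nat \<Rightarrow> bool" where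
  "good \<alpha> m \<longleftrightarrow> frac (real m * \<alpha>) < 1/4 \<or> frac (real m * \<alpha>) > 3/4"

lemma chain:
  assumes HF: "\<And>t L. F (t + L) - F t = \<lfloor>real L * \<alpha>\<rfloor> \<or> F (t + L) - F t = \<lfloor>real L * \<alpha>\<rfloor> + 1"
    and g: "good \<alpha> m"
  shows "\<exists>k<3. F (p0 + k * m + m) - F (p0 + k * m) = F (p0 + k * m + m + m) - F (p0 + k * m + m)"
proof (rule ccontr)
  assume "\<not> ?thesis"
  then have ne: "F (p0 + k * m + m) - F (p0 + k * m) \<noteq> F (p0 + k * m + m + m) - F (p0 + k * m + m)"
    if "k < 3" for k using that by blast
  define c where "c = \<lfloor>real m * \<alpha>\<rfloor>"
  define G where "G k = F (p0 + k * m)" for k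
  define d where "d k = G (Suc k) - G k" for k
  have dd: "d k = F (p0 + k * m + m) - F (p0 + k * m)" for k
    by (simp add: d_def G_def add_ac)
  have dd2: "d (Suc k) = F (p0 + k * m + m + m) - F (p0 + k * m + m)" for k
    by (simp add: d_def G_def add_ac)
  have dv: "d k = c \<or> d k = c + 1" for k unfolding dd c_def using HF by blast
  have nek: "d k \<noteq> d (Suc k)" if "k < 3" for k using ne[OF that] by (simp only: dd[of k] dd2[of k]) simp
  have n0: "d 0 \<noteq> d 1" using nek[of 0] by simp
  have n1: "d 1 \<noteq> d 2" using nek[of 1] by (simp add: numeral_2_eq_2)
  have n2: "d 2 \<noteq> d 3" using nek[of 2] by (simp add: numeral_2_eq_2 numeral_3_eq_3)
  have sum: "d 0 + d 1 + d 2 + d 3 = F (p0 + 4 * m) - F p0"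
  proof -
    have "d 0 + d 1 + d 2 + d 3 = G 4 - G 0"
      by (simp add: d_def numeral_2_eq_2 numeral_3_eq_3 eval_nat_numeral)
    then show ?thesis by (simp add: G_def)
  qed
  have s2: "d 0 + d 1 + d 2 + d 3 = 4 * c + 2"
    using dv[of 0] dv[of 1] dv[of 2] dv[of 3] n0 n1 n2 by auto
  have hf4: "F (p0 + 4 * m) - F p0 = \<lfloor>real (4 * m) * \<alpha>\<rfloor> \<or> F (p0 + 4 * m) - F p0 = \<lfloor>real (4 * m) * \<alpha>\<rfloor> + 1"
    using HF by blast
  have fr: "frac (real m * \<alpha>) = real m * \<alpha> - c" by (simp add: c_def frac_def)
  have e4: "real (4 * m) * \<alpha> = 4 * (real m * \<alpha>)" by simp
  show False
  proof (cases "frac (real m * \<alpha>) < 1/4")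
    case True
    then have "\<lfloor>real (4 * m) * \<alpha>\<rfloor> = 4 * c" unfolding e4 using fr
      by (simp add: floor_eq_iff) (smt (verit) of_int_floor_le c_def)
    then show False using hf4 sum s2 by linarith
  next
    case False
    then have "frac (real m * \<alpha>) > 3/4" using g good_def by blast
    then have "real (4 * m) * \<alpha> \<ge> of_int (4 * c + 3)" unfolding e4 using fr by simp
    then have "\<lfloor>real (4 * m) * \<alpha>\<rfloor> \<ge> 4 * c + 3" by (simp add: le_floor_iff)
    then show False using hf4 sum s2 by linarith
  qed
qed

lemma good_multiple:
  "\<exists>j\<in>{1..4::nat}. good \<alpha> (j * m)"
proof -
  define x where "x j = frac (real (j * m) * \<alpha>)" for j :: nat
  define g where "g j = \<lfloor>4 * x j\<rfloor>" for j
  have "g ` {0..4} \<subseteq> {0..3}"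
  proof
    fix y assume "y \<in> g ` {0..4}"
    then obtain j where y: "y = g j" by blast
    have "0 \<le> x j" "x j < 1" by (auto simp: x_def frac_lt_1)
    then have "0 \<le> 4 * x j" "4 * x j < 4" by linarith+
    then have "0 \<le> g j" "g j < 4" unfolding g_def by (simp_all add: floor_less_iff)
    then show "y \<in> {0..3}" using y by auto
  qed
  then have "card (g ` {0..4}) \<le> card {0..3::int}" by (intro card_mono) auto
  then have "card (g ` {0..4}) < card {0..4::nat}" by simp
  then have "\<not> inj_on g {0..4}" by (rule pigeonhole)
  then obtain j1 j2 where j: "j1 \<in> {0..4}" "j2 \<in> {0..4}" "j1 \<noteq> j2" "g j1 = g j2"
    unfolding inj_on_def by blast
  have key: "good \<alpha> (j2 * m - j1 * m)" if "j1 < j2" "g j1 = g j2" for j1 j2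
  proof -
    have "\<bar>x j2 - x j1\<bar> < 1/4"
    proof -
      have "g j1 \<le> 4 * x j1" "4 * x j1 < g j1 + 1" "g j2 \<le> 4 * x j2" "4 * x j2 < g j2 + 1"
        unfolding g_def by linarith+
      then show ?thesis using that(2) by linarith
    qed
    have ed: "real (j2 * m - j1 * m) * \<alpha> = real (j2 * m) * \<alpha> - real (j1 * m) * \<alpha>"
      using that(1) by (simp add: of_nat_diff left_diff_distrib)
    show ?thesis
    proof (cases "x j1 \<le> x j2")
      case True
      then have "frac (real (j2 * m - j1 * m) * \<alpha>) = x j2 - x j1"
        unfolding ed x_def by (rule frac_diff_pos)
      then show ?thesis unfolding good_def using \<open>\<bar>x j2 - x j1\<bar> < 1/4\<close> True by auto
    next
      case False
      then have "frac (real (j2 * m - j1 * m) * \<alpha>) = x j2 + 1 - x j1"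
        unfolding ed x_def by (intro frac_diff_neg) (simp add: x_def)
      then show ?thesis unfolding good_def using \<open>\<bar>x j2 - x j1\<bar> < 1/4\<close> False by auto
    qed
  qed
  show ?thesis
  proof (cases "j1 < j2")
    case True
    then have "good \<alpha> ((j2 - j1) * m)" using key j by (simp add: diff_mult_distrib)
    then show ?thesis using True j by (intro bexI[of _ "j2 - j1"]) auto
  next
    case False
    then have "j2 < j1" using j by simp
    then have "good \<alpha> ((j1 - j2) * m)" using key j by (simp add: diff_mult_distrib)
    then show ?thesis using \<open>j2 < j1\<close> j by (intro bexI[of _ "j1 - j2"]) auto
  qed
qed


lemma fiber_card:
  assumes "finite X" "\<And>y. y \<in> f ` X \<Longrightarrow> card {x\<in>X. f x = y} \<le> K"
  shows "card X \<le> K * card (f ` X)"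
proof -
  have "X = (\<Union>y\<in>f ` X. {x\<in>X. f x = y})" by auto
  moreover have "card (\<Union>y\<in>f ` X. {x\<in>X. f x = y}) \<le> (\<Sum>y\<in>f ` X. card {x\<in>X. f x = y})"
    by (rule card_UN_le) (simp add: assms(1))
  ultimately have "card X \<le> (\<Sum>y\<in>f ` X. card {x\<in>X. f x = y})" by simp
  also have "\<dots> \<le> (\<Sum>y\<in>f ` X. K)" by (rule sum_mono) (rule assms(2))
  also have "\<dots> = K * card (f ` X)" by simp
  finally show ?thesis .
qed

lemma div_block:
  fixes x y s :: nat
  assumes "x div s = y div s" "x < y" "0 < s"
  shows "y - x < s"
proof -
  have "x div s * s + x mod s = x" "y div s * s + y mod s = y" by (rule div_mult_mod_eq)+
  moreover have "y mod s < s" using assms(3) by simp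
  moreover have "x div s * s = y div s * s" using assms(1) by simp
  ultimately show ?thesis using assms(2) by linarith
qed

lemma finite_factors: "finite {u. is_factor u v}"
proof -
  have "{u. is_factor u v} \<subseteq> (\<lambda>(k, j). take j (drop k v)) ` ({..length v} \<times> {..length v})"
  proof
    fix u assume "u \<in> {u. is_factor u v}"
    then obtain xs ys where v: "v = xs @ u @ ys" unfolding is_factor_def by blast
    then have "u = take (length u) (drop (length xs) v)" by simp
    moreover have "length xs \<le> length v" "length u \<le> length v" using v by auto
    ultimately show "u \<in> (\<lambda>(k, j). take j (drop k v)) ` ({..length v} \<times> {..length v})"
      by force
  qed
  then show ?thesis by (rule finite_subset) auto
qed

lemma mod_inj_aux:
  fixes x x' k k' m :: nat
  assumes "x < m" "x' < m" "x + k * m = x' + k' * m"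
  shows "x = x'"
proof -
  have "x = (x + k * m) mod m" using assms(1) by simp
  also have "\<dots> = (x' + k' * m) mod m" using assms(3) by simp
  also have "\<dots> = x'" using assms(2) by simp
  finally show ?thesis .
qed



lemma core:
  fixes \<alpha> \<beta> :: real and w :: "nat \<Rightarrow> letter" and F :: "nat \<Rightarrow> int"
  assumes HF: "\<And>t L. F (t + L) - F t = \<lfloor>real L * \<alpha>\<rfloor> \<or> F (t + L) - F t = \<lfloor>real L * \<alpha>\<rfloor> + 1"
    and HW: "\<And>t. w t = a \<longleftrightarrow> F (Suc t) - F t = 1"
    and al: "0 < \<alpha>" "\<alpha> < 1"
    and pf: "power_free \<beta> w" and \<beta>2: "\<beta> \<ge> 2"
    and B: "B = nat \<lceil>\<beta>\<rceil>" and n: "80 * B \<le> n"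
  shows "n * n \<le> 6400 * 644 * B * card {u. is_factor u (inf_factor w i n) \<and> abelian_square u}"
proof -
  define A where "A = n div 40"
  define s where "s = A div B"
  define T where "T = {u. is_factor u (inf_factor w i n) \<and> abelian_square u}"
  define P where "P m = {p. i \<le> p \<and> p + 2 * m \<le> i + n \<and> F (p + m) - F p = F (p + m + m) - F (p + m)}" for m
  define D where "D m = (\<lambda>p. inf_factor w p (2 * m)) ` P m" for m
  define M where "M = {m. A \<le> m \<and> m < 8 * A \<and> good \<alpha> m}"
  have B2: "2 \<le> B" using \<beta>2 B by linarith
  have Bb: "\<beta> \<le> real B" using B by linarith
  have A2: "2 * B \<le> A" using n by (simp add: A_def)
  have A1: "1 \<le> A" using A2 B2 by linarith
  have nA: "n \<le> 80 * A" using A1 by (simp add: A_def) 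
  have Bs: "B * s \<le> A" by (simp add: s_def)
  have Bs2: "A \<le> 2 * B * s"
  proof -
    have "B * s + A mod B = A" unfolding s_def by (rule mult_div_mod_eq)
    moreover have "A mod B < B" using B2 by simp
    ultimately have "A < B * s + B" by linarith
    moreover have "B \<le> B * s"
    proof -
      have "1 \<le> s" unfolding s_def using div_le_mono[of B A B] A2 B2 by simp
      then show ?thesis by simp
    qed
    ultimately show ?thesis using A2 by linarith
  qed
  have s1: "0 < s" using Bs2 A1 by (cases s) auto
  have finP: "finite (P m)" for m
    by (rule finite_subset[of _ "{..i+n}"]) (auto simp: P_def)
  have Pbig: "m \<le> card (P m)" if mM: "m \<in> M" for m
  proof -
    have m: "A \<le> m" "m < 8 * A" "good \<alpha> m" using mM by (auto simp: M_def)
    define cond where "cond p0 k \<longleftrightarrow> k < 3 \<and> F (p0 + k * m + m) - F (p0 + k * m) = F (p0 + k * m + m + m) - F (p0 + k * m + m)" for p0 k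
    define kf where "kf p0 = (SOME k. cond p0 k)" for p0
    have ck: "cond p0 (kf p0)" for p0
    proof -
      have ex: "\<exists>k. cond p0 k" using chain[OF HF m(3), of p0] unfolding cond_def by blast
      show ?thesis unfolding kf_def by (rule someI_ex[OF ex])
    qed
    define g where "g p0 = p0 + kf p0 * m" for p0
    have "inj_on g {i..<i+m}"
    proof
      fix x y assume xy: "x \<in> {i..<i+m}" "y \<in> {i..<i+m}" "g x = g y"
      then have "x + kf x * m = y + kf y * m" by (simp add: g_def)
      then have "(x - i) + kf x * m = (y - i) + kf y * m" using xy(1,2) by simp
      then have "x - i = y - i" by (rule mod_inj_aux[rotated 2]) (use xy in auto)
      then show "x = y" using xy by auto
    qed
    moreover have "g ` {i..<i+m} \<subseteq> P m"
    proof
      fix y assume "y \<in> g ` {i..<i+m}"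
      then obtain p0 where p0: "p0 \<in> {i..<i+m}" "y = g p0" by blast
      have c: "cond p0 (kf p0)" by (rule ck)
      then have "kf p0 \<le> 2" by (simp add: cond_def)
      then have "kf p0 * m \<le> 2 * m" by simp
      moreover have "40 * A \<le> n" by (simp add: A_def)
      moreover have "y = p0 + kf p0 * m" by (simp add: p0 g_def)
      moreover have "p0 < i + m" using p0(1) by simp
      ultimately have "y + 2 * m \<le> i + n" using m(2) by linarith
      then show "y \<in> P m" using c p0 by (simp add: P_def g_def cond_def)
    qed
    ultimately have "card {i..<i+m} \<le> card (P m)" by (intro card_inj_on_le finP)
    then show ?thesis by simp
  qed
  have Pfib: "card (P m) \<le> (n div s + 1) * card (D m)" if mM: "m \<in> M" for m
    unfolding D_def
  proof (rule fiber_card[OF finP])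
    fix y
    have m: "A \<le> m" using mM by (simp add: M_def)
    let ?Y = "{x \<in> P m. inf_factor w x (2 * m) = y}"
    have "inj_on (\<lambda>p. (p - i) div s) ?Y"
    proof (rule inj_onI, rule ccontr)
      have close: False if pq: "p \<in> ?Y" "q \<in> ?Y" "(p - i) div s = (q - i) div s" "p < q" for p q
      proof -
        have ip: "i \<le> p" "i \<le> q" using pq by (auto simp: P_def)
        have "(q - i) - (p - i) < s" by (rule div_block) (use pq ip s1 in auto)
        then have qp: "q - p < s" using ip by linarith
        have eq: "inf_factor w p (2 * m) = inf_factor w q (2 * m)" using pq by simp
        have "real (2 * m) < (\<beta> - 1) * real (q - p)"
          by (rule pf_distinct[OF pf \<open>p < q\<close> _ eq]) (use m A1 in auto)
        also have "\<dots> \<le> (\<beta> - 1) * real s" using qp \<beta>2 by (intro mult_left_mono) auto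
        also have "\<dots> \<le> real B * real s" using Bb by (intro mult_right_mono) auto
        also have "\<dots> \<le> real m" using Bs m by (metis of_nat_le_iff of_nat_mult order.trans)
        finally show False by simp
      qed
      fix p q assume "p \<in> ?Y" "q \<in> ?Y" "(p - i) div s = (q - i) div s" "p \<noteq> q"
      then show False using close[of p q] close[of q p] by (cases "p < q") auto
    qed
    moreover have "(\<lambda>p. (p - i) div s) ` ?Y \<subseteq> {..n div s}"
    proof
      fix z assume "z \<in> (\<lambda>p. (p - i) div s) ` ?Y"
      then obtain p where "p \<in> P m" "z = (p - i) div s" by auto
      then have "p - i \<le> n" "z = (p - i) div s" by (auto simp: P_def)
      then show "z \<in> {..n div s}" by (simp add: div_le_mono)
    qed
    ultimately have "card ?Y \<le> card {..n div s}" by (intro card_inj_on_le) auto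
    then show "card ?Y \<le> n div s + 1" by simp
  qed
  have DT: "D m \<subseteq> T" if "m \<in> M" for m
  proof
    fix u assume "u \<in> D m"
    then obtain p where p: "p \<in> P m" "u = inf_factor w p (2 * m)" by (auto simp: D_def)
    have "abelian_square u" using p AS_lemma[OF HF HW al, of p m] by (simp add: P_def)
    moreover have "is_factor u (inf_factor w i n)" using p by (intro factor_sub[of i p "2*m" n w, simplified p(2)[symmetric]]) (auto simp: P_def)
    ultimately show "u \<in> T" by (simp add: T_def)
  qed
  have finT: "finite T" unfolding T_def by (rule finite_subset[OF _ finite_factors]) auto
  have finM: "finite M" by (rule finite_subset[of _ "{..<8*A}"]) (auto simp: M_def)
  have finD: "finite (D m)" for m using finP by (simp add: D_def)
  have disj: "D m1 \<inter> D m2 = {}" if "m1 \<noteq> m2" for m1 m2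
    using that by (auto simp: D_def dest!: arg_cong[of _ _ length])
  have cardT: "(\<Sum>m\<in>M. card (D m)) \<le> card T"
  proof -
    have "(\<Sum>m\<in>M. card (D m)) = card (\<Union>m\<in>M. D m)"
      by (rule card_UN_disjoint[symmetric]) (use finM finD disj in auto)
    also have "\<dots> \<le> card T" by (rule card_mono[OF finT]) (use DT in auto)
    finally show ?thesis .
  qed
  have Mbig: "A \<le> 4 * card M"
  proof -
    have "{A..<2*A} \<subseteq> (\<Union>j\<in>{1..4::nat}. {m\<in>{A..<2*A}. good \<alpha> (j * m)})"
      using good_multiple by blast
    then have "card {A..<2*A} \<le> card (\<Union>j\<in>{1..4::nat}. {m\<in>{A..<2*A}. good \<alpha> (j * m)})"
      by (intro card_mono) auto
    also have "\<dots> \<le> (\<Sum>j\<in>{1..4::nat}. card {m\<in>{A..<2*A}. good \<alpha> (j * m)})"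
      by (rule card_UN_le) simp
    also have "\<dots> \<le> (\<Sum>j\<in>{1..4::nat}. card M)"
    proof (rule sum_mono)
      fix j :: nat assume j: "j \<in> {1..4}"
      have "inj_on (\<lambda>m. j * m) {m\<in>{A..<2*A}. good \<alpha> (j * m)}" using j by (auto simp: inj_on_def)
      moreover have "(\<lambda>m. j * m) ` {m\<in>{A..<2*A}. good \<alpha> (j * m)} \<subseteq> M"
      proof
        fix y assume "y \<in> (\<lambda>m. j * m) ` {m\<in>{A..<2*A}. good \<alpha> (j * m)}"
        then obtain m where "m \<in> {A..<2*A}" "good \<alpha> (j * m)" "y = j * m" by auto
        moreover have "A \<le> j * m" "j * m < 8 * A"
        proof -
          show "A \<le> j * m" using j \<open>m \<in> {A..<2*A}\<close> by (simp add: order.trans[OF _ mult_le_mono[of 1 j A m]])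
          have "j * m \<le> 4 * m" using j by simp
          moreover have "m < 2 * A" using \<open>m \<in> {A..<2*A}\<close> by simp
          ultimately show "j * m < 8 * A" by linarith
        qed
        ultimately show "y \<in> M" by (simp add: M_def)
      qed
      ultimately show "card {m\<in>{A..<2*A}. good \<alpha> (j * m)} \<le> card M"
        by (intro card_inj_on_le finM)
    qed
    also have "\<dots> = 4 * card M" by simp
    finally show ?thesis by simp
  qed
  have key: "A * card M \<le> (n div s + 1) * card T"
  proof -
    have "A * card M = (\<Sum>m\<in>M. A)" by simp
    also have "\<dots> \<le> (\<Sum>m\<in>M. card (P m))"
      by (rule sum_mono) (use Pbig in \<open>auto simp: M_def intro: order.trans\<close>)
    also have "\<dots> \<le> (\<Sum>m\<in>M. (n div s + 1) * card (D m))" by (rule sum_mono) (rule Pfib)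
    also have "\<dots> = (n div s + 1) * (\<Sum>m\<in>M. card (D m))" by (simp add: sum_distrib_left)
    also have "\<dots> \<le> (n div s + 1) * card T" by (intro mult_le_mono2 cardT)
    finally show ?thesis .
  qed
  have "n div s * A \<le> n div s * (2 * B * s)" using Bs2 by simp
  also have "\<dots> = 2 * B * (n div s * s)" by simp
  also have "\<dots> \<le> 2 * B * n" by (simp add: div_times_less_eq_dividend)
  also have "\<dots> \<le> 2 * B * (80 * A)" using nA by simp
  finally have "n div s * A \<le> (160 * B) * A" by simp
  then have nds: "n div s \<le> 160 * B" using A1 by simp
  have "A * A \<le> A * (4 * card M)" using Mbig by simp
  also have "\<dots> = 4 * (A * card M)" by simp
  also have "\<dots> \<le> 4 * ((n div s + 1) * card T)" using key by simp
  also have "\<dots> \<le> 4 * ((160 * B + B) * card T)" using nds B2 by (intro mult_le_mono) auto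
  finally have AA: "A * A \<le> 644 * B * card T" by simp
  have "n * n \<le> (80 * A) * (80 * A)" using nA by (intro mult_le_mono) auto
  also have "\<dots> = 6400 * (A * A)" by simp
  also have "\<dots> \<le> 6400 * (644 * B * card T)" using AA by simp
  finally show ?thesis by (simp add: T_def)
qed


theorem corollary3:
  fixes \<alpha> \<beta> :: real and w :: "nat \<Rightarrow> letter"
  assumes "0 < \<alpha>" "\<alpha> < 1" "\<alpha> \<notin> \<rat>"
    and "is_sturmian \<alpha> w"
    and "\<beta> \<ge> 2" "power_free \<beta> w"
  shows "unif_abelian_square_rich w"
proof -
  obtain F :: "nat \<Rightarrow> int" where
    HF: "\<And>t L. F (t + L) - F t = \<lfloor>real L * \<alpha>\<rfloor> \<or> F (t + L) - F t = \<lfloor>real L * \<alpha>\<rfloor> + 1"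
    and HW: "\<And>t. w t = a \<longleftrightarrow> F (Suc t) - F t = 1"
    using sturm_F[OF assms(1) assms(2) assms(4)] by blast
  define B where "B = nat \<lceil>\<beta>\<rceil>"
  have B2: "2 \<le> B" using assms(5) unfolding B_def by linarith
  define C where "C = 1 / (6400 * 644 * real B)"
  have Cpos: "C > 0" using B2 by (simp add: C_def)
  show ?thesis unfolding unif_abelian_square_rich_def
  proof (intro exI[of _ C] conjI exI[of _ "80 * B"] allI impI)
    show "C > 0" by (rule Cpos)
    fix n i :: nat assume n: "80 * B \<le> n"
    define T where "T = {u. is_factor u (inf_factor w i n) \<and> abelian_square u}"
    have "n * n \<le> 6400 * 644 * B * card T"
      unfolding T_def by (rule core[OF HF HW assms(1,2,6,5) B_def n])
    then have "real (n * n) \<le> real (6400 * 644 * B * card T)" by (simp only: of_nat_le_iff)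
    then have h: "real n ^ 2 \<le> 6400 * 644 * real B * real (card T)" by (simp add: power2_eq_square)
    have "C * real n ^ 2 \<le> C * (6400 * 644 * real B * real (card T))"
      using h Cpos by (intro mult_left_mono) auto
    also have "\<dots> = real (card T)" using B2 by (simp add: C_def)
    finally show "C * real n ^ 2 \<le> real (card T)" .
  qed
qed

end
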